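(* Let $N\ge1$, $\sigma>0$, let $\psi:[0,2]\to[0,+\infty)$ be a decreasing $C^1$ function with $\psi(2)=0$ and $\psi'(2)<0$, and let $(x_i,v_i)_{i=1}^N$ be the solution of $$\dot x_i=v_i,\qquad \dot v_i=-\frac{\|v_i\|^2}{\|x_i\|^2}x_i+\sum_{j=1}^N\frac{\psi_{ij}}{N}\big(R(x_j,x_i)v_j-v_i\big)+\sum_{k=1}^N\frac{\sigma}{N}\big(\|x_i\|^2x_k-\langle x_i,x_k\rangle x_i\big),\quad \psi_{ij}=\psi(\|x_i-x_j\|),$$ with initial data satisfying $\|x_i(0)\|=1$, $\langle v_i(0),x_i(0)\rangle=0$ for all $i$. If $2\sigma>N^2\mathcal{E}(0)$, then the system has time-asymptotic flocking on the unit sphere, i.e. $$\lim_{t\to\infty}\max_{1\le i,j\le N}\|x_i(t)+x_j(t)\|\,\big\|R(x_j(t),x_i(t))v_j(t)-v_i(t)\big\|=0\quad\text{and}\quad \liminf_{t\ge0}\min_{1\le i,j\le N}\|x_i(t)+x_j(t)\|>0.$$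
   Context: $\|\cdot\|$ is the Euclidean norm, $\langle\cdot,\cdot\rangle$ the inner product on $\mathbb{R}^3$. For column vectors $x_1,x_2$ in the unit sphere with $x_1\ne-x_2$, $R(x_1,x_2)=I$ if $x_1=x_2$, and otherwise $R(x_1,x_2)=\langle x_1,x_2\rangle I-x_1x_2^T+x_2x_1^T+(1-\langle x_1,x_2\rangle)uu^T$, $u=\frac{x_1\times x_2}{\|x_1\times x_2\|}$. When $x_j=-x_i$, $\psi_{ij}R(x_j,x_i)v_j$ and $\|x_i+x_j\|\,\|R(x_j,x_i)v_j-v_i\|$ are taken to be $0$. The energy is $\mathcal{E}=\frac1N\sum_{k=1}^N\|v_k\|^2+\frac{\sigma}{2N^2}\sum_{k,l=1}^N\|x_k-x_l\|^2$. "Time-asymptotic flocking on a sphere" means exactly the two displayed conditions (velocity alignment and antipodal points avoidance). *)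

theory Defs
  imports "HOL-Analysis.Analysis"
begin

definition outer :: "real^3 \<Rightarrow> real^3 \<Rightarrow> real^3^3" where
  "outer a b = (\<chi> i j. a $ i * b $ j)"

definition Rot :: "real^3 \<Rightarrow> real^3 \<Rightarrow> real^3^3" where
  "Rot x1 x2 = (if x1 = x2 then mat 1 else
     (let u = (1 / norm (cross3 x1 x2)) *\<^sub>R cross3 x1 x2 in
        (x1 \<bullet> x2) *\<^sub>R mat 1 - outer x1 x2 + outer x2 x1 + (1 - x1 \<bullet> x2) *\<^sub>R outer u u))"

definition psiRv :: "(real \<Rightarrow> real) \<Rightarrow> real^3 \<Rightarrow> real^3 \<Rightarrow> real^3 \<Rightarrow> real^3" where
  "psiRv \<psi> xi xj vj = (if xj = - xi then 0 else \<psi> (norm (xi - xj)) *\<^sub>R (Rot xj xi *v vj))"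

definition align_err :: "real^3 \<Rightarrow> real^3 \<Rightarrow> real^3 \<Rightarrow> real^3 \<Rightarrow> real" where
  "align_err xi xj vi vj = (if xj = - xi then 0 else norm (xi + xj) * norm (Rot xj xi *v vj - vi))"

definition energy :: "nat \<Rightarrow> real \<Rightarrow> (nat \<Rightarrow> real^3) \<Rightarrow> (nat \<Rightarrow> real^3) \<Rightarrow> real" where
  "energy N \<sigma> x v = (1 / real N) * (\<Sum>k<N. (norm (v k))\<^sup>2)
     + \<sigma> / (2 * (real N)\<^sup>2) * (\<Sum>k<N. \<Sum>l<N. (norm (x k - x l))\<^sup>2)"

end

theory Submission
  imports Defs
begin



lemma outer_mult: "outer a b *v q = (b \<bullet> q) *\<^sub>R a"
  by (simp add: outer_def vec_eq_iff matrix_vector_mult_def inner_vec_def sum_3 algebra_simps)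

lemma scaleR_mv: "(c *\<^sub>R A) *v (q::real^'n) = c *\<^sub>R (A *v q)"
  by (simp add: vec_eq_iff matrix_vector_mult_def sum_distrib_left algebra_simps)

lemma Rot_mult: "Rot a b *v q = (if a = b then q else
   (a \<bullet> b) *\<^sub>R q - (b \<bullet> q) *\<^sub>R a + (a \<bullet> q) *\<^sub>R b
   + ((1 - a \<bullet> b) * ((cross3 a b) \<bullet> q) / (norm (cross3 a b))\<^sup>2) *\<^sub>R (cross3 a b))"
  by (simp add: Rot_def Let_def matrix_vector_mult_add_rdistrib matrix_vector_mult_diff_rdistrib
      outer_mult power2_eq_square scaleR_mv)

lemma gram: "((cross3 a b) \<bullet> (q::real^3))\<^sup>2 = (a\<bullet>a)*(b\<bullet>b)*(q\<bullet>q) + 2*(a\<bullet>b)*(b\<bullet>q)*(q\<bullet>a)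
   - (a\<bullet>a)*(b\<bullet>q)\<^sup>2 - (b\<bullet>b)*(a\<bullet>q)\<^sup>2 - (q\<bullet>q)*(a\<bullet>b)\<^sup>2"
  by (simp add: cross3_def inner_vec_def sum_3 power2_eq_square algebra_simps)

lemma inner_Rot: "b \<bullet> (Rot a b *v q) = (if a = b then a \<bullet> q else (b \<bullet> b) * (a \<bullet> q))"
  by (auto simp: Rot_mult inner_add_right inner_diff_right dot_cross_self inner_commute)

definition RFv :: "real^3 \<Rightarrow> real^3 \<Rightarrow> real^3 \<Rightarrow> real^3" where
  "RFv a b q = (a \<bullet> b) *\<^sub>R q - (b \<bullet> q) *\<^sub>R a + (a \<bullet> q) *\<^sub>R b
     + ((cross3 a b \<bullet> q) / (1 + a \<bullet> b)) *\<^sub>R cross3 a b"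

lemma unit_sum_pos:
  fixes a b :: "real^3"
  assumes "norm a = 1" "norm b = 1" "a \<noteq> - b"
  shows "1 + a \<bullet> b > 0"
proof -
  have "a + b \<noteq> 0" using assms(3) by (auto simp: eq_neg_iff_add_eq_0)
  hence "(a + b) \<bullet> (a + b) > 0" by simp
  moreover have "(a + b) \<bullet> (a + b) = 2 + 2 * (a \<bullet> b)"
    using assms(1,2) by (simp add: inner_add_left inner_add_right inner_commute norm_eq_1)
  ultimately show ?thesis by simp
qed

lemma unit_diff_pos:
  fixes a b :: "real^3"
  assumes "norm a = 1" "norm b = 1" "a \<noteq> b"
  shows "1 - a \<bullet> b > 0"
proof -
  have "a - b \<noteq> 0" using assms(3) by simp
  hence "(a - b) \<bullet> (a - b) > 0" by simp
  moreover have "(a - b) \<bullet> (a - b) = 2 - 2 * (a \<bullet> b)"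
    using assms(1,2) by (simp add: inner_diff_left inner_diff_right inner_commute norm_eq_1)
  ultimately show ?thesis by simp
qed

lemma Rot_RFv:
  fixes a b :: "real^3"
  assumes a: "norm a = 1" and b: "norm b = 1" and ab: "a \<noteq> - b"
  shows "Rot a b *v q = RFv a b q"
proof (cases "a = b")
  case True
  have "a \<bullet> a = 1" using a by (simp add: dot_square_norm)
  then show ?thesis using True by (simp add: Rot_mult RFv_def)
next
  case False
  have p: "1 + a \<bullet> b > 0" using unit_sum_pos[OF a b ab] .
  have m: "1 - a \<bullet> b > 0" using unit_diff_pos[OF a b False] .
  have w: "(norm (cross3 a b))\<^sup>2 = (1 - a \<bullet> b) * (1 + a \<bullet> b)"
    using norm_cross_dot[of a b] a b by (simp add: algebra_simps power2_eq_square)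
  have "(1 - a \<bullet> b) * (cross3 a b \<bullet> q) / (norm (cross3 a b))\<^sup>2 = (cross3 a b \<bullet> q) / (1 + a \<bullet> b)"
    unfolding w using m by (subst nonzero_mult_divide_mult_cancel_left) auto
  then show ?thesis using False by (simp add: Rot_mult RFv_def)
qed

lemma norm_RFv:
  fixes a b q :: "real^3"
  assumes a: "norm a = 1" and b: "norm b = 1" and p: "1 + a \<bullet> b > 0" and aq: "a \<bullet> q = 0"
  shows "norm (RFv a b q) = norm q"
proof -
  let ?c = "a \<bullet> b" and ?w = "cross3 a b"
  have aa: "a \<bullet> a = 1" and bb: "b \<bullet> b = 1" using a b by (simp_all add: dot_square_norm)
  have g: "(?w \<bullet> q)\<^sup>2 = (1 - ?c\<^sup>2) * (q \<bullet> q) - (b \<bullet> q)\<^sup>2"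
    using gram[of a b q] aa bb aq by (simp add: inner_commute algebra_simps)
  have ww: "?w \<bullet> ?w = 1 - ?c\<^sup>2"
    using norm_cross_dot[of a b] a b by (simp add: dot_square_norm power2_eq_square)
  define \<gamma> where "\<gamma> = (?w \<bullet> q) / (1 + ?c)"
  have \<gamma>: "\<gamma> * (1 + ?c) = ?w \<bullet> q" using p by (simp add: \<gamma>_def)
  have R: "RFv a b q = ?c *\<^sub>R q - (b \<bullet> q) *\<^sub>R a + \<gamma> *\<^sub>R ?w"
    using aq by (simp add: RFv_def \<gamma>_def)
  have e: "(x *\<^sub>R q - y *\<^sub>R a + z *\<^sub>R w) \<bullet> (x *\<^sub>R q - y *\<^sub>R a + z *\<^sub>R w)
     = x\<^sup>2 * (q \<bullet> q) + y\<^sup>2 * (a \<bullet> a) + z\<^sup>2 * (w \<bullet> w) - 2*x*y*(a \<bullet> q) + 2*x*z*(w \<bullet> q) - 2*y*z*(a \<bullet> w)"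
    for x y z and w :: "real^3"
    by (simp add: inner_add_left inner_add_right inner_diff_left inner_diff_right inner_commute
        power2_eq_square algebra_simps)
  have "RFv a b q \<bullet> RFv a b q = ?c\<^sup>2 * (q \<bullet> q) + (b \<bullet> q)\<^sup>2 + \<gamma>\<^sup>2 * (?w \<bullet> ?w)
       + 2 * ?c * \<gamma> * (?w \<bullet> q)"
    unfolding R e using aq aa by (simp add: dot_cross_self)
  also have "\<dots> = q \<bullet> q"
  proof -
    have "\<gamma>\<^sup>2 * (?w \<bullet> ?w) = \<gamma> * (?w \<bullet> q) * (1 - ?c)"
      unfolding ww using \<gamma>[symmetric] by (simp add: power2_eq_square algebra_simps)
    hence "\<gamma>\<^sup>2 * (?w \<bullet> ?w) + 2 * ?c * \<gamma> * (?w \<bullet> q) = \<gamma> * (1 + ?c) * (?w \<bullet> q)"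
      by (simp add: algebra_simps)
    also have "\<dots> = (?w \<bullet> q)\<^sup>2" using \<gamma> by (simp add: power2_eq_square)
    finally show ?thesis using g by (simp add: algebra_simps)
  qed
  finally show ?thesis by (simp add: norm_eq_sqrt_inner)
qed




lemma inner_vder:
  fixes f g :: "real \<Rightarrow> 'a::real_inner"
  assumes "(f has_vector_derivative f') (at t within S)" "(g has_vector_derivative g') (at t within S)"
  shows "((\<lambda>s. f s \<bullet> g s) has_field_derivative (f' \<bullet> g t + f t \<bullet> g')) (at t within S)"
  using has_derivative_inner[OF assms[unfolded has_vector_derivative_def]]
  by (rule has_derivative_imp_has_field_derivative) (simp add: algebra_simps)

lemma deriv_nonpos_le:
  fixes g :: "real \<Rightarrow> real"
  assumes ab: "a \<le> b" and d: "\<And>s. a \<le> s \<Longrightarrow> s \<le> b \<Longrightarrow> (g has_field_derivative g' s) (at s within S)"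
    and sub: "{a..b} \<subseteq> S" and n: "\<And>s. a \<le> s \<Longrightarrow> s \<le> b \<Longrightarrow> g' s \<le> 0"
  shows "g b \<le> g a"
proof -
  have "\<exists>s\<in>{a..b}. g b - g a = (\<lambda>s. (*) (g' s)) s (b - a)"
    apply (rule mvt_very_simple[OF ab, of g "\<lambda>s. (*) (g' s)"])
    using d sub by (meson has_derivative_subset has_field_derivative_def)
  then obtain s where s: "s \<in> {a..b}" "g b - g a = (b - a) * g' s" by (auto simp: mult.commute)
  have "(b - a) * g' s \<le> 0" using s(1) n ab by (simp add: mult_nonneg_nonpos)
  then show ?thesis using s by simp
qed

locale flock =
  fixes N :: nat and \<sigma> :: real
    and \<psi> \<psi>' :: "real \<Rightarrow> real"
    and x v :: "nat \<Rightarrow> real \<Rightarrow> real^3"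
  assumes N: "N \<ge> 1"
    and sigma: "\<sigma> > 0"
    and psi_nonneg: "\<And>s. s \<in> {0..2} \<Longrightarrow> \<psi> s \<ge> 0"
    and psi_decr: "\<And>a b. 0 \<le> a \<Longrightarrow> a \<le> b \<Longrightarrow> b \<le> 2 \<Longrightarrow> \<psi> b \<le> \<psi> a"
    and psi_deriv: "\<And>s. s \<in> {0..2} \<Longrightarrow> (\<psi> has_real_derivative \<psi>' s) (at s within {0..2})"
    and psi_C1: "continuous_on {0..2} \<psi>'"
    and psi_2: "\<psi> 2 = 0"
    and psi'_2: "\<psi>' 2 < 0"
    and ode_x: "\<And>i t. i < N \<Longrightarrow> t \<ge> 0 \<Longrightarrow>
        ((x i) has_vector_derivative v i t) (at t within {0..})"
    and ode_v: "\<And>i t. i < N \<Longrightarrow> t \<ge> 0 \<Longrightarrow>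
        ((v i) has_vector_derivative
           (- ((norm (v i t))\<^sup>2 / (norm (x i t))\<^sup>2) *\<^sub>R x i t
            + (\<Sum>j<N. (1 / real N) *\<^sub>R
                 (psiRv \<psi> (x i t) (x j t) (v j t) - \<psi> (norm (x i t - x j t)) *\<^sub>R v i t))
            + (\<Sum>k<N. (\<sigma> / real N) *\<^sub>R
                 ((norm (x i t))\<^sup>2 *\<^sub>R x k t - (x i t \<bullet> x k t) *\<^sub>R x i t))))
         (at t within {0..})"
    and init_sphere: "\<And>i. i < N \<Longrightarrow> norm (x i 0) = 1"
    and init_tangent: "\<And>i. i < N \<Longrightarrow> v i 0 \<bullet> x i 0 = 0"
    and energy_small: "2 * \<sigma> > (real N)\<^sup>2 * energy N \<sigma> (\<lambda>k. x k 0) (\<lambda>k. v k 0)"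
begin

definition "pp i j t = psiRv \<psi> (x i t) (x j t) (v j t) - \<psi> (norm (x i t - x j t)) *\<^sub>R v i t"

definition "F i t = - ((norm (v i t))\<^sup>2 / (norm (x i t))\<^sup>2) *\<^sub>R x i t
            + (\<Sum>j<N. (1 / real N) *\<^sub>R pp i j t)
            + (\<Sum>k<N. (\<sigma> / real N) *\<^sub>R
                 ((norm (x i t))\<^sup>2 *\<^sub>R x k t - (x i t \<bullet> x k t) *\<^sub>R x i t))"

lemma vder: "i < N \<Longrightarrow> t \<ge> 0 \<Longrightarrow> ((v i) has_vector_derivative F i t) (at t within {0..})"
  using ode_v unfolding F_def pp_def by blast

lemma xcont: "i < N \<Longrightarrow> continuous_on {0..} (x i)"
  by (rule continuous_on_vector_derivative) (use ode_x in auto)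

lemma vcont: "i < N \<Longrightarrow> continuous_on {0..} (v i)"
  by (rule continuous_on_vector_derivative) (use vder in auto)

definition "a i t = x i t \<bullet> x i t"
definition "b i t = x i t \<bullet> v i t"
definition "Q t = (\<Sum>i<N. (a i t - 1)\<^sup>2 + (b i t)\<^sup>2)"
definition "En t = energy N \<sigma> (\<lambda>k. x k t) (\<lambda>k. v k t)"
definition "onS t = (\<forall>i<N. norm (x i t) = 1 \<and> x i t \<bullet> v i t = 0)"

lemma Q_nonneg: "Q t \<ge> 0"
  unfolding Q_def by (intro sum_nonneg) auto

lemma Q_zero_iff: "Q t = 0 \<longleftrightarrow> onS t"
proof -
  have "Q t = 0 \<longleftrightarrow> (\<forall>i<N. (a i t - 1)\<^sup>2 + (b i t)\<^sup>2 = 0)"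
    unfolding Q_def by (subst sum_nonneg_eq_0_iff) auto
  also have "\<dots> \<longleftrightarrow> onS t"
    unfolding onS_def a_def b_def by (auto simp: norm_eq_1 add_nonneg_eq_0_iff)
  finally show ?thesis .
qed

lemma Q0: "Q 0 = 0"
  unfolding Q_zero_iff onS_def using init_sphere init_tangent by (simp add: inner_commute)

lemma inner_pp: "x i t \<bullet> pp i j t =
   (if x j t = - x i t then 0 else \<psi> (norm (x i t - x j t)) * (if x j t = x i t then 1 else a i t) * b j t)
   - \<psi> (norm (x i t - x j t)) * b i t"
  unfolding pp_def psiRv_def a_def b_def
  by (auto simp: inner_diff_right inner_Rot)

lemma inner_F: "x i t \<noteq> 0 \<Longrightarrow> x i t \<bullet> F i t = - (v i t \<bullet> v i t) + (\<Sum>j<N. x i t \<bullet> pp i j t) / real N"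
  unfolding F_def
  by (simp add: inner_add_right inner_diff_right inner_sum_right dot_square_norm[symmetric]
      sum_divide_distrib power2_norm_eq_inner)

lemma a_der: "i < N \<Longrightarrow> t \<ge> 0 \<Longrightarrow> (a i has_field_derivative 2 * b i t) (at t within {0..})"
  unfolding a_def[abs_def] b_def
  using inner_vder[OF ode_x ode_x, of i t i] by (simp add: inner_commute)

lemma b_der: "i < N \<Longrightarrow> t \<ge> 0 \<Longrightarrow> (b i has_field_derivative (v i t \<bullet> v i t + x i t \<bullet> F i t)) (at t within {0..})"
  unfolding b_def[abs_def]
  using inner_vder[OF ode_x vder, of i t i] by (simp add: inner_commute)

definition "Q' t = (\<Sum>i<N. 2 * (a i t - 1) * (2 * b i t) + 2 * b i t * (v i t \<bullet> v i t + x i t \<bullet> F i t))"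

lemma Q_der: "t \<ge> 0 \<Longrightarrow> (Q has_field_derivative Q' t) (at t within {0..})"
  unfolding Q_def[abs_def] Q'_def
  by (rule DERIV_sum) (auto intro!: derivative_eq_intros a_der b_der)

lemma psi_bounds: "s \<in> {0..2} \<Longrightarrow> 0 \<le> \<psi> s \<and> \<psi> s \<le> \<psi> 0"
  using psi_nonneg psi_decr by auto

lemma sq_le_Q: "i < N \<Longrightarrow> (b i t)\<^sup>2 \<le> Q t \<and> (a i t - 1)\<^sup>2 \<le> Q t"
proof -
  assume i: "i < N"
  have "(a i t - 1)\<^sup>2 + (b i t)\<^sup>2 \<le> Q t"
    unfolding Q_def using i by (intro member_le_sum) auto
  then show ?thesis by (smt (verit) zero_le_power2)
qed

lemma prod_le_Q: "i < N \<Longrightarrow> j < N \<Longrightarrow> \<bar>b i t\<bar> * \<bar>b j t\<bar> \<le> Q t"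
proof -
  assume "i < N" "j < N"
  then have "(b i t)\<^sup>2 \<le> Q t" "(b j t)\<^sup>2 \<le> Q t" using sq_le_Q by auto
  moreover have "2 * (\<bar>b i t\<bar> * \<bar>b j t\<bar>) \<le> (b i t)\<^sup>2 + (b j t)\<^sup>2"
    using sum_squares_bound[of "\<bar>b i t\<bar>" "\<bar>b j t\<bar>"] by (simp add: power2_eq_square)
  ultimately show ?thesis by linarith
qed

lemma ab_le_Q: "i < N \<Longrightarrow> (a i t - 1) * b i t \<le> Q t"
proof -
  assume "i < N"
  then have "(a i t - 1)\<^sup>2 + (b i t)\<^sup>2 \<le> Q t"
    unfolding Q_def by (intro member_le_sum) auto
  moreover have "2 * ((a i t - 1) * b i t) \<le> (a i t - 1)\<^sup>2 + (b i t)\<^sup>2"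
  proof -
    have "0 \<le> (a i t - 1 - b i t)\<^sup>2" by simp
    then show ?thesis by (simp add: power2_eq_square algebra_simps)
  qed
  moreover have "0 \<le> (a i t - 1)\<^sup>2 + (b i t)\<^sup>2" by simp
  ultimately show ?thesis by linarith
qed

lemma pp_bound:
  assumes i: "i < N" and j: "j < N" and aa: "a i s \<le> 2" and dd: "norm (x i s - x j s) \<le> 2"
  shows "\<bar>x i s \<bullet> pp i j s\<bar> \<le> \<psi> 0 * (2 * \<bar>b j s\<bar> + \<bar>b i s\<bar>)"
proof -
  let ?p = "\<psi> (norm (x i s - x j s))"
  have p: "0 \<le> ?p" "?p \<le> \<psi> 0" using psi_bounds[of "norm (x i s - x j s)"] dd by auto
  have a0: "0 \<le> a i s" unfolding a_def by simp
  define k where "k = (if x j s = x i s then 1 else a i s)"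
  have k: "\<bar>k\<bar> \<le> 2" using aa a0 by (auto simp: k_def)
  define T1 where "T1 = (if x j s = - x i s then 0 else ?p * k * b j s)"
  have "\<bar>?p * k * b j s\<bar> \<le> \<psi> 0 * 2 * \<bar>b j s\<bar>"
    unfolding abs_mult using p k by (intro mult_mono) auto
  moreover have "0 \<le> \<psi> 0 * \<bar>b j s\<bar>" using p by simp
  ultimately have t1: "\<bar>T1\<bar> \<le> \<psi> 0 * 2 * \<bar>b j s\<bar>" unfolding T1_def by auto
  have t2: "\<bar>?p * b i s\<bar> \<le> \<psi> 0 * \<bar>b i s\<bar>"
    unfolding abs_mult using p by (intro mult_mono) auto
  have e: "x i s \<bullet> pp i j s = T1 - ?p * b i s" unfolding inner_pp T1_def k_def by simp
  have "\<bar>T1 - ?p * b i s\<bar> \<le> \<bar>T1\<bar> + \<bar>?p * b i s\<bar>" by (rule abs_triangle_ineq4)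
  then show ?thesis unfolding e using t1 t2 by (simp add: distrib_left)
qed

lemma Q'_bound:
  assumes cond: "\<And>i j. i < N \<Longrightarrow> j < N \<Longrightarrow> x i s \<noteq> 0 \<and> a i s \<le> 2 \<and> norm (x i s - x j s) \<le> 2"
  shows "Q' s \<le> real N * (4 + 6 * \<psi> 0) * Q s"
proof -
  have P0: "0 \<le> \<psi> 0" using psi_bounds[of 0] by auto
  have "2 * (a i s - 1) * (2 * b i s) + 2 * b i s * (v i s \<bullet> v i s + x i s \<bullet> F i s) \<le> (4 + 6 * \<psi> 0) * Q s"
    if i: "i < N" for i
  proof -
    have xne: "x i s \<noteq> 0" using cond[OF i i] by auto
    have e: "v i s \<bullet> v i s + x i s \<bullet> F i s = (\<Sum>j<N. x i s \<bullet> pp i j s) / real N"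
      using inner_F[OF xne] by simp
    have "b i s * (\<Sum>j<N. x i s \<bullet> pp i j s) \<le> \<bar>b i s\<bar> * (\<Sum>j<N. \<bar>x i s \<bullet> pp i j s\<bar>)"
      by (rule order_trans[OF abs_ge_self]) (simp add: abs_mult mult_left_mono sum_abs)
    also have "\<dots> \<le> \<bar>b i s\<bar> * (\<Sum>j<N. \<psi> 0 * (2 * \<bar>b j s\<bar> + \<bar>b i s\<bar>))"
      using pp_bound cond i by (intro mult_left_mono sum_mono) auto
    also have "\<dots> = (\<Sum>j<N. \<psi> 0 * (2 * (\<bar>b i s\<bar> * \<bar>b j s\<bar>) + \<bar>b i s\<bar> * \<bar>b i s\<bar>))"
      by (simp add: sum_distrib_left algebra_simps)
    also have "\<dots> \<le> (\<Sum>j<N. \<psi> 0 * (3 * Q s))"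
    proof (rule sum_mono, rule mult_left_mono)
      fix j assume "j \<in> {..<N}"
      then have "\<bar>b i s\<bar> * \<bar>b j s\<bar> \<le> Q s" "\<bar>b i s\<bar> * \<bar>b i s\<bar> \<le> Q s"
        using prod_le_Q[OF i, of j s] prod_le_Q[OF i i, of s] by auto
      then show "2 * (\<bar>b i s\<bar> * \<bar>b j s\<bar>) + \<bar>b i s\<bar> * \<bar>b i s\<bar> \<le> 3 * Q s" by linarith
    qed (rule P0)
    also have "\<dots> = real N * (3 * \<psi> 0 * Q s)" by simp
    finally have 1: "b i s * (\<Sum>j<N. x i s \<bullet> pp i j s) \<le> real N * (3 * \<psi> 0 * Q s)" .
    have "2 * b i s * (v i s \<bullet> v i s + x i s \<bullet> F i s) = 2 * (b i s * (\<Sum>j<N. x i s \<bullet> pp i j s)) / real N"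
      unfolding e by simp
    also have "\<dots> \<le> 2 * (real N * (3 * \<psi> 0 * Q s)) / real N"
      using 1 by (intro divide_right_mono) auto
    also have "\<dots> = 6 * \<psi> 0 * Q s" using N by simp
    finally have 2: "2 * b i s * (v i s \<bullet> v i s + x i s \<bullet> F i s) \<le> 6 * \<psi> 0 * Q s" .
    have 3: "2 * (a i s - 1) * (2 * b i s) \<le> 4 * Q s"
    proof -
      have h: "(a i s - 1) * b i s \<le> Q s" by (rule ab_le_Q[OF i])
      have "2 * (a i s - 1) * (2 * b i s) = 4 * ((a i s - 1) * b i s)" by simp
      with h show ?thesis by linarith
    qed
    show ?thesis using 2 3 by (simp add: algebra_simps)
  qed
  then have "Q' s \<le> (\<Sum>i<N. (4 + 6 * \<psi> 0) * Q s)" unfolding Q'_def by (intro sum_mono) auto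
  then show ?thesis by simp
qed

lemma Q_local_zero:
  assumes T: "T \<ge> 0" and QT: "Q T = 0"
    and cond: "\<And>s i j. s \<in> {T..T+h} \<Longrightarrow> i < N \<Longrightarrow> j < N \<Longrightarrow>
        x i s \<noteq> 0 \<and> a i s \<le> 2 \<and> norm (x i s - x j s) \<le> 2"
    and s: "s \<in> {T..T+h}"
  shows "Q s = 0"
proof -
  define L where "L = real N * (4 + 6 * \<psi> 0)"
  define g where "g r = Q r * exp (- L * r)" for r
  have "g s \<le> g T"
  proof (rule deriv_nonpos_le[where S = "{0..}" and g = g and a = T and b = s
      and g' = "\<lambda>r. Q' r * exp (- L * r) + Q r * (exp (- L * r) * (- L))"])
    show "T \<le> s" using s by auto
    show "{T..s} \<subseteq> {0..}" using T by auto
    fix r assume r: "T \<le> r" "r \<le> s"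
    show "(g has_field_derivative (Q' r * exp (- L * r) + Q r * (exp (- L * r) * (- L)))) (at r within {0..})"
      unfolding g_def[abs_def] using T r
      by (auto intro!: derivative_eq_intros Q_der)
    have "Q' r \<le> L * Q r" unfolding L_def using cond s r by (intro Q'_bound) auto
    then show "Q' r * exp (- L * r) + Q r * (exp (- L * r) * (- L)) \<le> 0"
      by (simp add: algebra_simps mult_right_mono)
  qed
  then have "Q s \<le> 0" unfolding g_def using QT by (simp add: mult_le_0_iff)
  then show ?thesis using Q_nonneg[of s] by linarith
qed

end



context flock begin

definition "En' t = (1 / real N) * (\<Sum>k<N. 2 * (v k t \<bullet> F k t))
   + \<sigma> / (2 * (real N)\<^sup>2) * (\<Sum>k<N. \<Sum>l<N. 2 * ((x k t - x l t) \<bullet> (v k t - v l t)))"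

lemma En_alt: "En t = (1 / real N) * (\<Sum>k<N. v k t \<bullet> v k t)
   + \<sigma> / (2 * (real N)\<^sup>2) * (\<Sum>k<N. \<Sum>l<N. (x k t - x l t) \<bullet> (x k t - x l t))"
  unfolding En_def energy_def by (simp add: power2_norm_eq_inner)

lemma En_der: "t \<ge> 0 \<Longrightarrow> (En has_field_derivative En' t) (at t within {0..})"
proof -
  assume t: "t \<ge> 0"
  have xd: "((\<lambda>s. x k s - x l s) has_vector_derivative (v k t - v l t)) (at t within {0..})"
    if "k < N" "l < N" for k l using ode_x that t by (intro derivative_intros) auto
  have 1: "((\<lambda>s. v k s \<bullet> v k s) has_field_derivative 2 * (v k t \<bullet> F k t)) (at t within {0..})"
    if "k < N" for k using inner_vder[OF vder vder, of k t k] that t by (simp add: inner_commute)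
  have 2: "((\<lambda>s. (x k s - x l s) \<bullet> (x k s - x l s)) has_field_derivative 2 * ((x k t - x l t) \<bullet> (v k t - v l t))) (at t within {0..})"
    if "k < N" "l < N" for k l using inner_vder[OF xd xd, of k l k l] that by (simp add: inner_commute)
  have A: "((\<lambda>s. \<Sum>k<N. v k s \<bullet> v k s) has_field_derivative (\<Sum>k<N. 2 * (v k t \<bullet> F k t))) (at t within {0..})"
    by (rule DERIV_sum) (use 1 in auto)
  have B: "((\<lambda>s. \<Sum>k<N. \<Sum>l<N. (x k s - x l s) \<bullet> (x k s - x l s)) has_field_derivative
      (\<Sum>k<N. \<Sum>l<N. 2 * ((x k t - x l t) \<bullet> (v k t - v l t)))) (at t within {0..})"
    by (rule DERIV_sum, rule DERIV_sum) (use 2 in auto)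
  show ?thesis
    unfolding En_alt[abs_def] En'_def
    by (rule DERIV_add[OF DERIV_cmult[OF A] DERIV_cmult[OF B]])
qed

definition "d i j t = (if x j t = - x i t then 0 else
   \<psi> (norm (x i t - x j t)) * (norm (Rot (x j t) (x i t) *v v j t - v i t))\<^sup>2)"

lemma onS_dist: "onS t \<Longrightarrow> i < N \<Longrightarrow> j < N \<Longrightarrow> norm (x i t - x j t) \<le> 2"
  unfolding onS_def using norm_triangle_ineq4[of "x i t" "x j t"] by auto

lemma d_nonneg: "onS t \<Longrightarrow> i < N \<Longrightarrow> j < N \<Longrightarrow> d i j t \<ge> 0"
  unfolding d_def using onS_dist psi_nonneg by auto

lemma pair_id:
  assumes S: "onS t" and i: "i < N" and j: "j < N"
  shows "2 * (v i t \<bullet> pp i j t) = - d i j t + \<psi> (norm (x i t - x j t)) * (v j t \<bullet> v j t - v i t \<bullet> v i t)"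
proof (cases "x j t = - x i t")
  case True
  have "x i t - x j t = 2 *\<^sub>R x i t" using True by (simp add: scaleR_2)
  then have "norm (x i t - x j t) = 2" using S i unfolding onS_def by simp
  then show ?thesis using True unfolding pp_def psiRv_def d_def by (simp add: psi_2)
next
  case False
  have xi: "norm (x i t) = 1" and xj: "norm (x j t) = 1" and vj: "x j t \<bullet> v j t = 0"
    using S i j unfolding onS_def by auto
  have ne: "x j t \<noteq> - x i t" using False .
  have R: "norm (Rot (x j t) (x i t) *v v j t) = norm (v j t)"
    using Rot_RFv[OF xj xi ne] norm_RFv[OF xj xi unit_sum_pos[OF xj xi ne] vj] by simp
  have "(norm (Rot (x j t) (x i t) *v v j t - v i t))\<^sup>2
      = (norm (Rot (x j t) (x i t) *v v j t))\<^sup>2 - 2 * (v i t \<bullet> (Rot (x j t) (x i t) *v v j t)) + v i t \<bullet> v i t"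
    by (simp add: power2_norm_eq_inner inner_diff_left inner_diff_right inner_commute)
  then have "(norm (Rot (x j t) (x i t) *v v j t - v i t))\<^sup>2
      = v j t \<bullet> v j t - 2 * (v i t \<bullet> (Rot (x j t) (x i t) *v v j t)) + v i t \<bullet> v i t"
    using R by (simp add: power2_norm_eq_inner)
  then have dd: "d i j t = \<psi> (norm (x i t - x j t)) *
      (v j t \<bullet> v j t - 2 * (v i t \<bullet> (Rot (x j t) (x i t) *v v j t)) + v i t \<bullet> v i t)"
    unfolding d_def using False by simp
  have pp: "2 * (v i t \<bullet> pp i j t) = 2 * \<psi> (norm (x i t - x j t)) * (v i t \<bullet> (Rot (x j t) (x i t) *v v j t))
      - 2 * \<psi> (norm (x i t - x j t)) * (v i t \<bullet> v i t)"
    unfolding pp_def psiRv_def using False by (simp add: inner_diff_right)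
  show ?thesis unfolding dd pp by (simp add: algebra_simps)
qed

definition "fsum t = (\<Sum>i<N. \<Sum>j<N. d i j t)"

lemma En'_onS:
  assumes S: "onS t"
  shows "En' t = - fsum t / (real N)\<^sup>2"
proof -
  have xx: "x k t \<bullet> x k t = 1" and xv: "x k t \<bullet> v k t = 0" if "k < N" for k
    using S that unfolding onS_def by (auto simp: norm_eq_1)
  have vF: "v k t \<bullet> F k t = (\<Sum>j<N. v k t \<bullet> pp k j t) / real N + \<sigma> / real N * (\<Sum>l<N. v k t \<bullet> x l t)"
    if k: "k < N" for k
    using xx[OF k] xv[OF k] unfolding F_def
    by (simp add: inner_add_right inner_diff_right inner_sum_right power2_norm_eq_inner inner_commute
        sum_divide_distrib sum_distrib_left)
  have pos: "(x k t - x l t) \<bullet> (v k t - v l t) = - (v l t \<bullet> x k t) - (v k t \<bullet> x l t)"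
    if "k < N" "l < N" for k l
    using xv that by (simp add: inner_diff_left inner_diff_right inner_commute)
  have sw: "(\<Sum>k<N. \<Sum>l<N. v l t \<bullet> x k t) = (\<Sum>k<N. \<Sum>l<N. v k t \<bullet> x l t)"
    by (rule sum.swap)
  have psw: "(\<Sum>k<N. \<Sum>j<N. \<psi> (norm (x k t - x j t)) * (v j t \<bullet> v j t))
      = (\<Sum>k<N. \<Sum>j<N. \<psi> (norm (x k t - x j t)) * (v k t \<bullet> v k t))"
    by (subst sum.swap) (simp add: norm_minus_commute)
  have al: "(\<Sum>k<N. \<Sum>j<N. 2 * (v k t \<bullet> pp k j t)) = - fsum t"
  proof -
    have "(\<Sum>k<N. \<Sum>j<N. 2 * (v k t \<bullet> pp k j t)) = (\<Sum>k<N. \<Sum>j<N. - d k j t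
        + (\<psi> (norm (x k t - x j t)) * (v j t \<bullet> v j t) - \<psi> (norm (x k t - x j t)) * (v k t \<bullet> v k t)))"
      using pair_id[OF S] by (intro sum.cong refl) (simp add: algebra_simps)
    also have "\<dots> = - fsum t"
      unfolding fsum_def sum.distrib sum_subtractf psw sum_negf by simp
    finally show ?thesis .
  qed
  define S2 where "S2 = (\<Sum>k<N. \<Sum>l<N. v k t \<bullet> x l t)"
  define A where "A = (\<Sum>k<N. \<Sum>j<N. v k t \<bullet> pp k j t)"
  have "(\<Sum>k<N. \<Sum>l<N. 2 * ((x k t - x l t) \<bullet> (v k t - v l t)))
      = (\<Sum>k<N. \<Sum>l<N. (- 2 * (v l t \<bullet> x k t) - 2 * (v k t \<bullet> x l t)))"
    by (intro sum.cong refl) (simp add: pos)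
  also have "\<dots> = - 2 * (\<Sum>k<N. \<Sum>l<N. v l t \<bullet> x k t) - 2 * S2" unfolding S2_def
    by (simp add: sum_subtractf sum_distrib_left)
  also have "\<dots> = - 4 * S2" unfolding sw S2_def by simp
  finally have P: "(\<Sum>k<N. \<Sum>l<N. 2 * ((x k t - x l t) \<bullet> (v k t - v l t))) = - 4 * S2" .
  have "(\<Sum>k<N. 2 * (v k t \<bullet> F k t)) = (\<Sum>k<N. (2 / real N) * (\<Sum>j<N. v k t \<bullet> pp k j t)
        + (2 * \<sigma> / real N) * (\<Sum>l<N. v k t \<bullet> x l t))"
    by (intro sum.cong refl) (simp add: vF)
  also have "\<dots> = (2 / real N) * A + (2 * \<sigma> / real N) * S2"
    unfolding A_def S2_def by (simp add: sum.distrib sum_distrib_left)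
  finally have V: "(\<Sum>k<N. 2 * (v k t \<bullet> F k t)) = (2 / real N) * A + (2 * \<sigma> / real N) * S2" .
  have A2: "2 * A = - fsum t" using al unfolding A_def by (simp add: sum_distrib_left)
  have "En' t = (2 * A) / (real N)\<^sup>2"
    unfolding En'_def P V using N by (simp add: field_simps power2_eq_square)
  also have "\<dots> = - fsum t / (real N)\<^sup>2" using A2 by simp
  finally show ?thesis .
qed

end



context flock begin

lemma En'_nonpos: "onS t \<Longrightarrow> En' t \<le> 0"
proof -
  assume S: "onS t"
  have "fsum t \<ge> 0" unfolding fsum_def using d_nonneg[OF S] by (intro sum_nonneg) auto
  then show ?thesis using En'_onS[OF S] by simp
qed

lemma En_mono:
  assumes "0 \<le> t1" "t1 \<le> t2" "\<And>s. t1 \<le> s \<Longrightarrow> s \<le> t2 \<Longrightarrow> onS s"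
  shows "En t2 \<le> En t1"
  by (rule deriv_nonpos_le[where S = "{0..}" and g = En and g' = En' and a = t1 and b = t2])
     (use assms En_der En'_nonpos in auto)

lemma En_nonneg: "En t \<ge> 0"
  unfolding En_def energy_def using sigma by (intro add_nonneg_nonneg mult_nonneg_nonneg sum_nonneg) auto

lemma dist_En:
  assumes i: "i < N" and j: "j < N"
  shows "(norm (x i t - x j t))\<^sup>2 \<le> 2 * (real N)\<^sup>2 * En t / \<sigma>"
proof -
  have "(norm (x i t - x j t))\<^sup>2 \<le> (\<Sum>l<N. (norm (x i t - x l t))\<^sup>2)"
    using j by (intro member_le_sum) auto
  also have "\<dots> \<le> (\<Sum>k<N. \<Sum>l<N. (norm (x k t - x l t))\<^sup>2)"
    using i by (intro member_le_sum[where f = "\<lambda>k. \<Sum>l<N. (norm (x k t - x l t))\<^sup>2"] sum_nonneg) auto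
  finally have 1: "(norm (x i t - x j t))\<^sup>2 \<le> (\<Sum>k<N. \<Sum>l<N. (norm (x k t - x l t))\<^sup>2)" .
  have 2: "0 \<le> (1 / real N) * (\<Sum>k<N. (norm (v k t))\<^sup>2)" by (intro mult_nonneg_nonneg sum_nonneg) auto
  have "\<sigma> / (2 * (real N)\<^sup>2) * (norm (x i t - x j t))\<^sup>2 \<le> \<sigma> / (2 * (real N)\<^sup>2) * (\<Sum>k<N. \<Sum>l<N. (norm (x k t - x l t))\<^sup>2)"
    using 1 sigma by (intro mult_left_mono) auto
  also have "\<dots> \<le> En t" unfolding En_def energy_def using 2 by simp
  finally have "\<sigma> / (2 * (real N)\<^sup>2) * (norm (x i t - x j t))\<^sup>2 \<le> En t" .
  then show ?thesis using sigma N by (simp add: field_simps)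
qed

lemma v_En:
  assumes i: "i < N"
  shows "(norm (v i t))\<^sup>2 \<le> real N * En t"
proof -
  have 1: "(norm (v i t))\<^sup>2 \<le> (\<Sum>k<N. (norm (v k t))\<^sup>2)" using i by (intro member_le_sum) auto
  have 2: "0 \<le> \<sigma> / (2 * (real N)\<^sup>2) * (\<Sum>k<N. \<Sum>l<N. (norm (x k t - x l t))\<^sup>2)"
    using sigma by (intro mult_nonneg_nonneg sum_nonneg) auto
  have "(1 / real N) * (norm (v i t))\<^sup>2 \<le> (1 / real N) * (\<Sum>k<N. (norm (v k t))\<^sup>2)"
    using 1 by (intro mult_left_mono) auto
  also have "\<dots> \<le> En t" unfolding En_def energy_def using 2 by simp
  finally show ?thesis using N by (simp add: field_simps)
qed

definition "Mx = 2 * (real N)\<^sup>2 * En 0 / \<sigma>"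

lemma Mx_lt4: "Mx < 4"
  using energy_small sigma unfolding Mx_def En_def by (simp add: field_simps)

lemma Q_cont: "t \<ge> 0 \<Longrightarrow> continuous (at t within {0..}) Q"
  using Q_der DERIV_continuous by blast

lemma onS_all: "t \<ge> 0 \<Longrightarrow> onS t"
proof (rule ccontr)
  assume t0: "t \<ge> 0" and nS: "\<not> onS t"
  define B where "B = {s. s \<ge> 0 \<and> Q s \<noteq> 0}"
  define T where "T = Inf B"
  have tB: "t \<in> B" using t0 nS Q_zero_iff unfolding B_def by auto
  have bdd: "bdd_below B" unfolding B_def by (rule bdd_belowI[of _ 0]) auto
  have T0: "T \<ge> 0" unfolding T_def using tB by (intro cInf_greatest) (auto simp: B_def)
  have below: "Q s = 0" if "0 \<le> s" "s < T" for s
  proof (rule ccontr)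
    assume "Q s \<noteq> 0"
    then have "s \<in> B" using that unfolding B_def by auto
    then have "T \<le> s" unfolding T_def by (rule cInf_lower[OF _ bdd])
    then show False using that by simp
  qed
  have QT: "Q T = 0"
  proof (cases "T = 0")
    case True then show ?thesis using Q0 by simp
  next
    case False
    then have Tp: "T > 0" using T0 by simp
    show ?thesis
    proof (rule ccontr)
      assume "Q T \<noteq> 0"
      then have "Q T > 0" using Q_nonneg[of T] by simp
      moreover have "(Q \<longlongrightarrow> Q T) (at T within {0..})" using Q_cont[OF T0] continuous_within by blast
      ultimately have "eventually (\<lambda>s. Q s > 0) (at T within {0..})"
        by (rule order_tendstoD(1)[rotated])
      then obtain e where e: "e > 0" "\<forall>s\<in>{0..}. 0 < dist s T \<and> dist s T < e \<longrightarrow> Q s > 0"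
        unfolding eventually_at by auto
      define s where "s = max (T / 2) (T - e / 2)"
      have "0 \<le> s" "s < T" "0 < dist s T" "dist s T < e" using Tp e unfolding s_def dist_real_def by auto
      then show False using e(2) below[of s] by auto
    qed
  qed
  have S_upto: "onS s" if "0 \<le> s" "s \<le> T" for s
    using below[of s] QT that Q_zero_iff by (cases "s = T") auto
  have EnT: "En T \<le> En 0" using En_mono[of 0 T] S_upto T0 by auto
  have distT: "norm (x i T - x j T) < 2" if "i < N" "j < N" for i j
  proof -
    have "(norm (x i T - x j T))\<^sup>2 \<le> 2 * (real N)\<^sup>2 * En T / \<sigma>" by (rule dist_En[OF that])
    also have "\<dots> \<le> Mx" unfolding Mx_def using EnT sigma by (intro divide_right_mono mult_left_mono) auto
    finally have "(norm (x i T - x j T))\<^sup>2 < 2\<^sup>2" using Mx_lt4 by simp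
    then show ?thesis by (rule power_less_imp_less_base) simp
  qed
  have xT: "norm (x i T) = 1" if "i < N" for i using S_upto[of T] T0 that unfolding onS_def by auto
  have ev: "eventually (\<lambda>s. \<forall>i\<in>{..<N}. \<forall>j\<in>{..<N}. norm (x i s - x j s) < 2 \<and> norm (x i s) > 1/2 \<and> norm (x i s) < 4/3)
      (at T within {0..})"
  proof (intro eventually_ball_finite ballI finite_lessThan eventually_conj)
    fix i j assume i: "i \<in> {..<N}" and j: "j \<in> {..<N}"
    have ci: "continuous (at T within {0..}) (x i)" and cj: "continuous (at T within {0..}) (x j)"
      using xcont i j T0 by (auto simp: continuous_on_eq_continuous_within)
    have l1: "((\<lambda>s. norm (x i s - x j s)) \<longlongrightarrow> norm (x i T - x j T)) (at T within {0..})"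
      using ci cj unfolding continuous_within by (intro tendsto_intros)
    have l2: "((\<lambda>s. norm (x i s)) \<longlongrightarrow> norm (x i T)) (at T within {0..})"
      using ci unfolding continuous_within by (intro tendsto_intros)
    show "eventually (\<lambda>s. norm (x i s - x j s) < 2) (at T within {0..})"
      using order_tendstoD(2)[OF l1] distT i j by auto
    show "eventually (\<lambda>s. norm (x i s) > 1/2) (at T within {0..})"
    proof -
      have "(1/2::real) < norm (x i T)" using xT i by simp
      from order_tendstoD(1)[OF l2 this] show ?thesis .
    qed
    show "eventually (\<lambda>s. norm (x i s) < 4/3) (at T within {0..})"
    proof -
      have "norm (x i T) < (4/3::real)" using xT i by simp
      from order_tendstoD(2)[OF l2 this] show ?thesis .
    qed
  qed
  then obtain e where e: "e > 0" and eP: "\<forall>s\<in>{0..}. 0 < dist s T \<and> dist s T < e \<longrightarrow>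
      (\<forall>i\<in>{..<N}. \<forall>j\<in>{..<N}. norm (x i s - x j s) < 2 \<and> norm (x i s) > 1/2 \<and> norm (x i s) < 4/3)"
    unfolding eventually_at by auto
  define h where "h = e / 2"
  have cond: "x i s \<noteq> 0 \<and> a i s \<le> 2 \<and> norm (x i s - x j s) \<le> 2"
    if s: "s \<in> {T..T+h}" and i: "i < N" and j: "j < N" for s i j
  proof (cases "s = T")
    case True
    then show ?thesis using xT[OF i] distT[OF i j] unfolding a_def by (auto simp: norm_eq_1)
  next
    case False
    then have "0 < dist s T" "dist s T < e" "s \<in> {0..}" using s e T0 unfolding h_def dist_real_def by auto
    then have P: "norm (x i s - x j s) < 2" "norm (x i s) > 1/2" "norm (x i s) < 4/3"
      using eP i j by auto
    have "a i s = (norm (x i s))\<^sup>2" unfolding a_def by (simp add: power2_norm_eq_inner)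
    also have "\<dots> \<le> (4/3)\<^sup>2" using P by (intro power_mono) auto
    finally have "a i s \<le> 2" by (simp add: power2_eq_square)
    then show ?thesis using P by auto
  qed
  have Qz: "Q s = 0" if "s \<in> {T..T+h}" for s
    by (rule Q_local_zero[OF T0 QT cond that])
  have "Inf B < T + h" using e unfolding T_def h_def by simp
  then have "\<exists>b\<in>B. b < T + h" using cInf_less_iff[OF _ bdd] tB by blast
  then obtain b where bB: "b \<in> B" "b < T + h" by blast
  have "T \<le> b" unfolding T_def by (rule cInf_lower[OF bB(1) bdd])
  then have "Q b = 0" using Qz bB by auto
  then show False using bB unfolding B_def by auto
qed

end



context flock begin

lemma psi_cont: "continuous_on {0..2} \<psi>"
  unfolding continuous_on_eq_continuous_within
  by (intro ballI DERIV_continuous[OF psi_deriv]) auto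

lemma psi_pos: assumes "0 \<le> r" "r < 2" shows "\<psi> r > 0"
proof -
  have "((\<lambda>y. (\<psi> y - \<psi> 2) / (y - 2)) \<longlongrightarrow> \<psi>' 2) (at 2 within {0..2})"
    using psi_deriv[of 2] has_field_derivative_iff by auto
  from order_tendstoD(2)[OF this psi'_2]
  obtain e where e: "e > 0" "\<forall>y\<in>{0..2}. 0 < dist y 2 \<and> dist y 2 < e \<longrightarrow> (\<psi> y - \<psi> 2) / (y - 2) < 0"
    unfolding eventually_at by auto
  define y where "y = max r (2 - e / 2)"
  have y: "0 \<le> y" "y < 2" "0 < dist y 2" "dist y 2 < e" "r \<le> y"
    using assms e unfolding y_def dist_real_def by auto
  then have "\<psi> y / (y - 2) < 0" using e(2) psi_2 by auto
  then have "\<psi> y > 0" using y by (simp add: divide_less_0_iff)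
  moreover have "\<psi> y \<le> \<psi> r" using psi_decr[of r y] y assms by auto
  ultimately show ?thesis by simp
qed

lemma En_dec: "0 \<le> t1 \<Longrightarrow> t1 \<le> t2 \<Longrightarrow> En t2 \<le> En t1"
  using En_mono onS_all by auto

lemma dist_Mx: "t \<ge> 0 \<Longrightarrow> i < N \<Longrightarrow> j < N \<Longrightarrow> (norm (x i t - x j t))\<^sup>2 \<le> Mx"
proof -
  assume t: "t \<ge> 0" and ij: "i < N" "j < N"
  have "(norm (x i t - x j t))\<^sup>2 \<le> 2 * (real N)\<^sup>2 * En t / \<sigma>" by (rule dist_En[OF ij])
  also have "\<dots> \<le> Mx" unfolding Mx_def using En_dec[of 0 t] t sigma
    by (intro divide_right_mono mult_left_mono) auto
  finally show ?thesis .
qed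

lemma unit_x: "t \<ge> 0 \<Longrightarrow> i < N \<Longrightarrow> norm (x i t) = 1"
  using onS_all unfolding onS_def by auto

lemma tangent: "t \<ge> 0 \<Longrightarrow> i < N \<Longrightarrow> x i t \<bullet> v i t = 0"
  using onS_all unfolding onS_def by auto

lemma sum_norm:
  assumes "t \<ge> 0" "i < N" "j < N"
  shows "(norm (x i t + x j t))\<^sup>2 = 4 - (norm (x i t - x j t))\<^sup>2"
  using unit_x[OF assms(1,2)] unit_x[OF assms(1,3)]
  by (simp add: power2_norm_eq_inner inner_add_left inner_add_right inner_diff_left inner_diff_right
      inner_commute norm_eq_1)

lemma set_img: "{f i j |i j. i < N \<and> j < N} = (\<lambda>(i, j). f i j) ` ({..<N} \<times> {..<N})"
  by auto

lemma set_fin: "finite {f i j |i j. i < N \<and> j < N}"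
  unfolding set_img by simp

lemma set_ne: "{f i j |i j. i < N \<and> j < N} \<noteq> {}"
  using N by (auto intro!: exI[of _ 0])

lemma liminf_part:
  "Liminf at_top (\<lambda>t. ereal (Min {norm (x i t + x j t) | i j. i < N \<and> j < N})) > 0"
proof -
  define m where "m = sqrt (4 - Mx)"
  have m: "m > 0" unfolding m_def using Mx_lt4 by simp
  have "m \<le> Min {norm (x i t + x j t) | i j. i < N \<and> j < N}" if t: "t \<ge> 0" for t
  proof -
    have "m \<le> norm (x i t + x j t)" if ij: "i < N" "j < N" for i j
    proof -
      have "4 - Mx \<le> (norm (x i t + x j t))\<^sup>2" using sum_norm[OF t ij] dist_Mx[OF t ij] by simp
      then have "sqrt (4 - Mx) \<le> sqrt ((norm (x i t + x j t))\<^sup>2)" by (rule real_sqrt_le_mono)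
      then show ?thesis unfolding m_def by simp
    qed
    then show ?thesis by (subst Min_ge_iff[OF set_fin set_ne]) auto
  qed
  then have "eventually (\<lambda>t. ereal m \<le> ereal (Min {norm (x i t + x j t) | i j. i < N \<and> j < N})) at_top"
    by (intro eventually_at_top_linorderI[of 0]) auto
  then have "ereal m \<le> Liminf at_top (\<lambda>t. ereal (Min {norm (x i t + x j t) | i j. i < N \<and> j < N}))"
    by (rule Liminf_bounded)
  then show ?thesis using m by (meson ereal_less(2) less_le_trans)
qed

end



context flock begin

definition "VB = sqrt (real N * En 0)"
definition "CF = VB\<^sup>2 + 2 * \<psi> 0 * VB + 2 * \<sigma>"

lemma VB_nonneg: "VB \<ge> 0" unfolding VB_def using En_nonneg by simp

lemma v_bound: "t \<ge> 0 \<Longrightarrow> i < N \<Longrightarrow> norm (v i t) \<le> VB"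
proof -
  assume t: "t \<ge> 0" and i: "i < N"
  have "(norm (v i t))\<^sup>2 \<le> real N * En 0"
  proof -
    have "real N * En t \<le> real N * En 0" using En_dec[of 0 t] t by (intro mult_left_mono) auto
    then show ?thesis using v_En[OF i, of t] by linarith
  qed
  then show ?thesis unfolding VB_def by (simp add: real_le_rsqrt)
qed

lemma psi_ij: "t \<ge> 0 \<Longrightarrow> i < N \<Longrightarrow> j < N \<Longrightarrow> 0 \<le> \<psi> (norm (x i t - x j t)) \<and> \<psi> (norm (x i t - x j t)) \<le> \<psi> 0"
  using psi_bounds onS_dist onS_all by auto

lemma psiRv_bound: "t \<ge> 0 \<Longrightarrow> i < N \<Longrightarrow> j < N \<Longrightarrow> norm (psiRv \<psi> (x i t) (x j t) (v j t)) \<le> \<psi> 0 * VB"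
proof -
  assume t: "t \<ge> 0" and i: "i < N" and j: "j < N"
  show ?thesis
  proof (cases "x j t = - x i t")
    case True then show ?thesis unfolding psiRv_def using psi_bounds[of 0] VB_nonneg by simp
  next
    case False
    have xi: "norm (x i t) = 1" and xj: "norm (x j t) = 1" using unit_x t i j by auto
    have "norm (Rot (x j t) (x i t) *v v j t) = norm (v j t)"
      using Rot_RFv[OF xj xi False] norm_RFv[OF xj xi unit_sum_pos[OF xj xi False] tangent[OF t j]] by simp
    then have "norm (psiRv \<psi> (x i t) (x j t) (v j t)) = \<psi> (norm (x i t - x j t)) * norm (v j t)"
      unfolding psiRv_def using False psi_ij[OF t i j] by simp
    also have "\<dots> \<le> \<psi> 0 * VB" using psi_ij[OF t i j] v_bound[OF t j] by (intro mult_mono) auto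
    finally show ?thesis .
  qed
qed

lemma pp_norm: "t \<ge> 0 \<Longrightarrow> i < N \<Longrightarrow> j < N \<Longrightarrow> norm (pp i j t) \<le> 2 * \<psi> 0 * VB"
proof -
  assume t: "t \<ge> 0" and i: "i < N" and j: "j < N"
  have "norm (\<psi> (norm (x i t - x j t)) *\<^sub>R v i t) \<le> \<psi> 0 * VB"
    using psi_ij[OF t i j] v_bound[OF t i] by (simp add: mult_mono)
  moreover have "norm (pp i j t) \<le> norm (psiRv \<psi> (x i t) (x j t) (v j t)) + norm (\<psi> (norm (x i t - x j t)) *\<^sub>R v i t)"
    unfolding pp_def by (rule norm_triangle_ineq4)
  ultimately show ?thesis using psiRv_bound[OF t i j] by linarith
qed

lemma F_bound: "t \<ge> 0 \<Longrightarrow> i < N \<Longrightarrow> norm (F i t) \<le> CF"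
proof -
  assume t: "t \<ge> 0" and i: "i < N"
  have xi: "norm (x i t) = 1" using unit_x t i by auto
  have 1: "norm (- ((norm (v i t))\<^sup>2 / (norm (x i t))\<^sup>2) *\<^sub>R x i t) \<le> VB\<^sup>2"
    using xi v_bound[OF t i] by (simp add: power_mono)
  have "norm (\<Sum>j<N. (1 / real N) *\<^sub>R pp i j t) \<le> (\<Sum>j<N. norm ((1 / real N) *\<^sub>R pp i j t))"
    by (rule norm_sum)
  also have "\<dots> \<le> (\<Sum>j<N. (1 / real N) * (2 * \<psi> 0 * VB))"
    using pp_norm[OF t i] by (intro sum_mono) (simp add: divide_right_mono)
  also have "\<dots> = 2 * \<psi> 0 * VB" using N by simp
  finally have 2: "norm (\<Sum>j<N. (1 / real N) *\<^sub>R pp i j t) \<le> 2 * \<psi> 0 * VB" .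
  have "norm (\<Sum>k<N. (\<sigma> / real N) *\<^sub>R ((norm (x i t))\<^sup>2 *\<^sub>R x k t - (x i t \<bullet> x k t) *\<^sub>R x i t))
      \<le> (\<Sum>k<N. norm ((\<sigma> / real N) *\<^sub>R ((norm (x i t))\<^sup>2 *\<^sub>R x k t - (x i t \<bullet> x k t) *\<^sub>R x i t)))"
    by (rule norm_sum)
  also have "\<dots> \<le> (\<Sum>k<N. (\<sigma> / real N) * 2)"
  proof (rule sum_mono)
    fix k assume k: "k \<in> {..<N}"
    have xk: "norm (x k t) = 1" using unit_x t k by auto
    have cs: "\<bar>x i t \<bullet> x k t\<bar> \<le> 1" using Cauchy_Schwarz_ineq2[of "x i t" "x k t"] xi xk by simp
    have "norm ((norm (x i t))\<^sup>2 *\<^sub>R x k t - (x i t \<bullet> x k t) *\<^sub>R x i t) \<le> 2"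
      using norm_triangle_ineq4[of "(norm (x i t))\<^sup>2 *\<^sub>R x k t" "(x i t \<bullet> x k t) *\<^sub>R x i t"] xi xk cs
      by simp
    then have "\<sigma> / real N * norm ((norm (x i t))\<^sup>2 *\<^sub>R x k t - (x i t \<bullet> x k t) *\<^sub>R x i t) \<le> \<sigma> / real N * 2"
      using sigma by (intro mult_left_mono) auto
    then show "norm ((\<sigma> / real N) *\<^sub>R ((norm (x i t))\<^sup>2 *\<^sub>R x k t - (x i t \<bullet> x k t) *\<^sub>R x i t)) \<le> \<sigma> / real N * 2"
      using sigma by simp
  qed
  also have "\<dots> = 2 * \<sigma>" using N by simp
  finally have 3: "norm (\<Sum>k<N. (\<sigma> / real N) *\<^sub>R ((norm (x i t))\<^sup>2 *\<^sub>R x k t - (x i t \<bullet> x k t) *\<^sub>R x i t)) \<le> 2 * \<sigma>" .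
  have "norm (F i t) \<le> norm (- ((norm (v i t))\<^sup>2 / (norm (x i t))\<^sup>2) *\<^sub>R x i t + (\<Sum>j<N. (1 / real N) *\<^sub>R pp i j t))
     + norm (\<Sum>k<N. (\<sigma> / real N) *\<^sub>R ((norm (x i t))\<^sup>2 *\<^sub>R x k t - (x i t \<bullet> x k t) *\<^sub>R x i t))"
    unfolding F_def by (rule norm_triangle_ineq)
  moreover have "norm (- ((norm (v i t))\<^sup>2 / (norm (x i t))\<^sup>2) *\<^sub>R x i t + (\<Sum>j<N. (1 / real N) *\<^sub>R pp i j t))
     \<le> norm (- ((norm (v i t))\<^sup>2 / (norm (x i t))\<^sup>2) *\<^sub>R x i t) + norm (\<Sum>j<N. (1 / real N) *\<^sub>R pp i j t)"
    by (rule norm_triangle_ineq)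
  ultimately show ?thesis unfolding CF_def using 1 2 3 by linarith
qed

lemma CF_nonneg: "CF \<ge> 0"
  unfolding CF_def using VB_nonneg psi_bounds[of 0] sigma by simp

lemma lip_gen:
  fixes f :: "real \<Rightarrow> real^3"
  assumes d: "\<And>t. t \<ge> 0 \<Longrightarrow> (f has_vector_derivative f' t) (at t within {0..})"
    and bnd: "\<And>t. t \<ge> 0 \<Longrightarrow> norm (f' t) \<le> L"
    and s: "s \<ge> 0" and t: "t \<ge> 0"
  shows "norm (f s - f t) \<le> L * \<bar>s - t\<bar>"
proof -
  have "norm (f s - f t) \<le> L * norm (s - t)"
  proof (rule differentiable_bound[where S = "{0..}" and f' = "\<lambda>t h. h *\<^sub>R f' t"])
    show "convex {0::real..}" by (rule convex_real_interval)
    show "(f has_derivative (\<lambda>h. h *\<^sub>R f' r)) (at r within {0..})" if "r \<in> {0..}" for r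
      using d[of r] that by (simp add: has_vector_derivative_def)
    show "onorm (\<lambda>h. h *\<^sub>R f' r) \<le> L" if "r \<in> {0..}" for r
    proof -
      have "onorm (\<lambda>h::real. h) = 1" by (rule onorm_id)
      then show ?thesis using bnd[of r] that onorm_scaleR_left[OF bounded_linear_ident, of "f' r"] by simp
    qed
  qed (use s t in auto)
  then show ?thesis by simp
qed

lemma lip_x: assumes "s \<ge> 0" "t \<ge> 0" "i < N" shows "norm (x i s - x i t) \<le> VB * \<bar>s - t\<bar>"
  using lip_gen[OF ode_x[OF assms(3)] v_bound[OF _ assms(3)] assms(1,2)] .

lemma lip_v: assumes "s \<ge> 0" "t \<ge> 0" "i < N" shows "norm (v i s - v i t) \<le> CF * \<bar>s - t\<bar>"
  using lip_gen[OF vder[OF assms(3)] F_bound[OF _ assms(3)] assms(1,2)] .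

end



context flock begin

definition Gf :: "(real^3) \<times> (real^3) \<times> (real^3) \<times> (real^3) \<Rightarrow> real" where
  "Gf z = \<psi> (norm (fst z - fst (snd z))) *
     (norm (RFv (fst (snd z)) (fst z) (snd (snd (snd z))) - fst (snd (snd z))))\<^sup>2"

definition "zz i j t = (x i t, x j t, v i t, v j t)"

definition Kset :: "((real^3) \<times> (real^3) \<times> (real^3) \<times> (real^3)) set" where "Kset = cball 0 (2 + 2 * VB) \<inter> {z. 2 - Mx / 2 \<le> 1 + fst (snd z) \<bullet> fst z}
   \<inter> {z. norm (fst z - fst (snd z)) \<le> 2}"

lemma not_antip: "t \<ge> 0 \<Longrightarrow> i < N \<Longrightarrow> j < N \<Longrightarrow> x j t \<noteq> - x i t"
proof
  assume t: "t \<ge> 0" and i: "i < N" and j: "j < N" and e: "x j t = - x i t"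
  have "x i t - x j t = 2 *\<^sub>R x i t" using e by (simp add: scaleR_2)
  then have "(norm (x i t - x j t))\<^sup>2 = 4" using unit_x[OF t i] by simp
  then show False using dist_Mx[OF t i j] Mx_lt4 by simp
qed

lemma d_G: "t \<ge> 0 \<Longrightarrow> i < N \<Longrightarrow> j < N \<Longrightarrow> d i j t = Gf (zz i j t)"
  unfolding d_def Gf_def zz_def
  using not_antip Rot_RFv unit_x by simp

lemma zz_K: "t \<ge> 0 \<Longrightarrow> i < N \<Longrightarrow> j < N \<Longrightarrow> zz i j t \<in> Kset"
proof -
  assume t: "t \<ge> 0" and i: "i < N" and j: "j < N"
  have "norm (zz i j t) \<le> norm (x i t) + (norm (x j t) + (norm (v i t) + norm (v j t)))"
    unfolding zz_def by (meson add_left_mono norm_Pair_le order_trans)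
  also have "\<dots> \<le> 2 + 2 * VB" using unit_x[OF t i] unit_x[OF t j] v_bound[OF t i] v_bound[OF t j] by simp
  finally have 1: "zz i j t \<in> cball 0 (2 + 2 * VB)" by simp
  have "(norm (x i t - x j t))\<^sup>2 = 2 - 2 * (x j t \<bullet> x i t)"
    using unit_x[OF t i] unit_x[OF t j]
    by (simp add: power2_norm_eq_inner inner_diff_left inner_diff_right inner_commute norm_eq_1)
  then have 2: "2 - Mx / 2 \<le> 1 + x j t \<bullet> x i t" using dist_Mx[OF t i j] by simp
  have 3: "norm (x i t - x j t) \<le> 2" using onS_dist onS_all t i j by auto
  show ?thesis using 1 2 3 unfolding Kset_def zz_def by simp
qed

lemma K_compact: "compact Kset"
  unfolding Kset_def
  by (intro compact_Int_closed compact_cball closed_Collect_le continuous_intros)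

lemma G_cont: "continuous_on Kset Gf"
proof -
  have pos: "1 + fst (snd z) \<bullet> fst z \<noteq> 0" if "z \<in> Kset" for z
    using that Mx_lt4 unfolding Kset_def by auto
  have c1: "continuous_on Kset (\<lambda>z. \<psi> (norm (fst z - fst (snd z))))"
    by (rule continuous_on_compose2[OF psi_cont]) (auto intro!: continuous_intros simp: Kset_def)
  have c2: "continuous_on Kset (\<lambda>z. RFv (fst (snd z)) (fst z) (snd (snd (snd z))))"
    unfolding RFv_def using pos by (intro continuous_intros continuous_on_cross) (auto simp: inner_commute)
  show ?thesis unfolding Gf_def[abs_def]
    using c1 c2 by (intro continuous_intros)
qed

lemma G_uc: "uniformly_continuous_on Kset Gf"
  by (rule compact_uniformly_continuous[OF G_cont K_compact])

definition "LL = 2 * VB + 2 * CF"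

lemma zz_lip: "s \<ge> 0 \<Longrightarrow> t \<ge> 0 \<Longrightarrow> i < N \<Longrightarrow> j < N \<Longrightarrow> dist (zz i j s) (zz i j t) \<le> LL * \<bar>s - t\<bar>"
proof -
  assume s: "s \<ge> 0" and t: "t \<ge> 0" and i: "i < N" and j: "j < N"
  have "dist (zz i j s) (zz i j t) = norm (x i s - x i t, x j s - x j t, v i s - v i t, v j s - v j t)"
    unfolding zz_def dist_norm by simp
  also have "\<dots> \<le> norm (x i s - x i t) + (norm (x j s - x j t) + (norm (v i s - v i t) + norm (v j s - v j t)))"
    by (meson add_left_mono norm_Pair_le order_trans)
  also have "\<dots> \<le> VB * \<bar>s - t\<bar> + (VB * \<bar>s - t\<bar> + (CF * \<bar>s - t\<bar> + CF * \<bar>s - t\<bar>))"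
    using lip_x[OF s t i] lip_x[OF s t j] lip_v[OF s t i] lip_v[OF s t j] by linarith
  also have "\<dots> = LL * \<bar>s - t\<bar>" unfolding LL_def by (simp add: algebra_simps)
  finally show ?thesis .
qed

lemma LL_nonneg: "LL \<ge> 0" unfolding LL_def using VB_nonneg CF_nonneg by simp

lemma d_uc: "i < N \<Longrightarrow> j < N \<Longrightarrow> uniformly_continuous_on {0..} (d i j)"
proof -
  assume i: "i < N" and j: "j < N"
  show ?thesis unfolding uniformly_continuous_on_def
  proof (intro allI impI)
    fix e :: real assume e: "e > 0"
    obtain r where r: "r > 0" "\<forall>z\<in>Kset. \<forall>z'\<in>Kset. dist z' z < r \<longrightarrow> dist (Gf z') (Gf z) < e"
      using G_uc e unfolding uniformly_continuous_on_def by metis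
    define \<delta> where "\<delta> = r / (LL + 1)"
    have \<delta>: "\<delta> > 0" unfolding \<delta>_def using r LL_nonneg by simp
    show "\<exists>\<delta>>0. \<forall>t\<in>{0..}. \<forall>s\<in>{0..}. dist s t < \<delta> \<longrightarrow> dist (d i j s) (d i j t) < e"
    proof (intro exI[of _ \<delta>] conjI ballI impI \<delta>)
      fix t s :: real assume t: "t \<in> {0..}" and s: "s \<in> {0..}" and st: "dist s t < \<delta>"
      have "dist (zz i j s) (zz i j t) \<le> LL * \<bar>s - t\<bar>" using zz_lip s t i j by simp
      also have "\<dots> \<le> LL * \<delta>" using st LL_nonneg by (intro mult_left_mono) (auto simp: dist_real_def)
      also have "\<dots> < r" unfolding \<delta>_def using r LL_nonneg by (simp add: field_simps)
      finally have "dist (zz i j s) (zz i j t) < r" .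
      then have "dist (Gf (zz i j s)) (Gf (zz i j t)) < e"
        using r(2) zz_K s t i j by auto
      then show "dist (d i j s) (d i j t) < e" using d_G s t i j by simp
    qed
  qed
qed

lemma fsum_uc: "uniformly_continuous_on {0..} fsum"
  unfolding fsum_def[abs_def]
  by (intro uniformly_continuous_on_sum d_uc) auto

end



context flock begin

lemma fsum_nonneg: "t \<ge> 0 \<Longrightarrow> fsum t \<ge> 0"
  unfolding fsum_def using d_nonneg onS_all by (intro sum_nonneg) auto

lemma fsum_lim: "(fsum \<longlongrightarrow> 0) at_top"
proof (rule order_tendstoI)
  fix a :: real assume "a < 0"
  then show "eventually (\<lambda>t. a < fsum t) at_top"
    using fsum_nonneg by (intro eventually_at_top_linorderI[of 0]) (auto intro: less_le_trans)
next
  fix \<epsilon> :: real assume \<epsilon>: "\<epsilon> > 0"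
  show "eventually (\<lambda>t. fsum t < \<epsilon>) at_top"
  proof (rule ccontr)
    assume "\<not> eventually (\<lambda>t. fsum t < \<epsilon>) at_top"
    then have H: "\<forall>T. \<exists>t\<ge>T. \<epsilon> \<le> fsum t" unfolding eventually_at_top_linorder by (auto simp: not_less)
    obtain \<delta> where \<delta>: "\<delta> > 0" "\<forall>t\<in>{0..}. \<forall>s\<in>{0..}. dist s t < \<delta> \<longrightarrow> dist (fsum s) (fsum t) < \<epsilon> / 2"
      using fsum_uc \<epsilon> unfolding uniformly_continuous_on_def by (metis half_gt_zero)
    define L where "L = Inf (En ` {0..})"
    have bdd: "bdd_below (En ` {0..})" using En_nonneg by (intro bdd_belowI[of _ 0]) auto
    define \<eta> where "\<eta> = \<epsilon> * \<delta> / (4 * (real N)\<^sup>2)"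
    have \<eta>: "\<eta> > 0" unfolding \<eta>_def using \<epsilon> \<delta> N by simp
    have "L < L + \<eta>" using \<eta> by simp
    then have "\<exists>y\<in>En ` {0..}. y < L + \<eta>" unfolding L_def using cInf_less_iff[OF _ bdd] by blast
    then obtain T0 where T0: "T0 \<ge> 0" "En T0 < L + \<eta>" by auto
    obtain t where t: "t \<ge> T0" "\<epsilon> \<le> fsum t" using H by blast
    have t0: "t \<ge> 0" using t T0 by simp
    define h where "h = \<delta> / 2"
    have big: "fsum r \<ge> \<epsilon> / 2" if "t \<le> r" "r \<le> t + h" for r
    proof -
      have "dist r t < \<delta>" using that \<delta> unfolding h_def dist_real_def by auto
      then have "dist (fsum r) (fsum t) < \<epsilon> / 2" using \<delta>(2) that t0 by auto
      then have "\<bar>fsum r - fsum t\<bar> < \<epsilon> / 2" unfolding dist_real_def .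
      then show ?thesis using t by linarith
    qed
    define c where "c = \<epsilon> / (2 * (real N)\<^sup>2)"
    have "En (t + h) + c * (t + h) \<le> En t + c * t"
    proof (rule deriv_nonpos_le[where S = "{0..}" and g = "\<lambda>r. En r + c * r" and a = t and b = "t + h"
          and g' = "\<lambda>r. En' r + c"])
      show "t \<le> t + h" using \<delta> unfolding h_def by simp
      show "{t..t + h} \<subseteq> {0..}" using t0 by auto
      fix r assume r: "t \<le> r" "r \<le> t + h"
      show "((\<lambda>r. En r + c * r) has_field_derivative En' r + c) (at r within {0..})"
        using r t0 by (auto intro!: derivative_eq_intros En_der)
      have "En' r = - fsum r / (real N)\<^sup>2" using En'_onS onS_all r t0 by simp
      moreover have "\<epsilon> / 2 / (real N)\<^sup>2 \<le> fsum r / (real N)\<^sup>2" using big[OF r] by (intro divide_right_mono) auto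
      moreover have "c = \<epsilon> / 2 / (real N)\<^sup>2" unfolding c_def by simp
      ultimately show "En' r + c \<le> 0" by simp
    qed
    then have "En (t + h) \<le> En t - c * h" by (simp add: algebra_simps)
    moreover have "c * h = \<eta>" unfolding c_def h_def \<eta>_def by (simp add: field_simps)
    moreover have "En t \<le> En T0" using En_dec T0 t by simp
    ultimately have "En (t + h) < L" using T0 by simp
    moreover have "L \<le> En (t + h)" unfolding L_def using t0 \<delta> unfolding h_def
      by (intro cInf_lower[OF _ bdd]) auto
    ultimately show False by simp
  qed
qed

lemma Mx_nonneg: "Mx \<ge> 0" unfolding Mx_def using En_nonneg sigma by simp

definition "pmin = \<psi> (sqrt Mx)"

lemma pmin_pos: "pmin > 0"
  unfolding pmin_def using Mx_lt4 Mx_nonneg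
  by (intro psi_pos) (auto simp: real_sqrt_less_iff[of Mx 4, simplified])

lemma d_le_fsum: "t \<ge> 0 \<Longrightarrow> i < N \<Longrightarrow> j < N \<Longrightarrow> d i j t \<le> fsum t"
proof -
  assume t: "t \<ge> 0" and i: "i < N" and j: "j < N"
  have "d i j t \<le> (\<Sum>l<N. d i l t)" using j d_nonneg onS_all t i by (intro member_le_sum) auto
  also have "\<dots> \<le> fsum t" unfolding fsum_def using i d_nonneg onS_all t
    by (intro member_le_sum[where f = "\<lambda>k. \<Sum>l<N. d k l t"] sum_nonneg) auto
  finally show ?thesis .
qed

lemma align_bound:
  assumes t: "t \<ge> 0" and i: "i < N" and j: "j < N"
  shows "align_err (x i t) (x j t) (v i t) (v j t) \<le> 2 * sqrt (fsum t / pmin)"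
proof -
  define w where "w = norm (Rot (x j t) (x i t) *v v j t - v i t)"
  have na: "x j t \<noteq> - x i t" by (rule not_antip[OF t i j])
  have "norm (x i t - x j t) \<le> sqrt Mx" using dist_Mx[OF t i j] by (simp add: real_le_rsqrt)
  moreover have "sqrt Mx \<le> 2" using Mx_lt4 Mx_nonneg by (simp add: real_sqrt_le_iff[of Mx 4, simplified])
  ultimately have pp: "pmin \<le> \<psi> (norm (x i t - x j t))" unfolding pmin_def by (intro psi_decr) auto
  have "pmin * w\<^sup>2 \<le> \<psi> (norm (x i t - x j t)) * w\<^sup>2" using pp by (intro mult_right_mono) auto
  also have "\<dots> = d i j t" unfolding d_def w_def using na by simp
  also have "\<dots> \<le> fsum t" by (rule d_le_fsum[OF t i j])
  finally have "w\<^sup>2 \<le> fsum t / pmin" using pmin_pos by (simp add: field_simps)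
  then have w: "w \<le> sqrt (fsum t / pmin)" by (simp add: real_le_rsqrt)
  have s: "norm (x i t + x j t) \<le> 2"
    using norm_triangle_ineq[of "x i t" "x j t"] unit_x[OF t i] unit_x[OF t j] by simp
  have "align_err (x i t) (x j t) (v i t) (v j t) = norm (x i t + x j t) * w"
    unfolding align_err_def w_def using na by simp
  also have "\<dots> \<le> 2 * sqrt (fsum t / pmin)" using s w by (intro mult_mono) (auto simp: w_def)
  finally show ?thesis .
qed

lemma align_nonneg: "align_err y1 y2 p q \<ge> 0"
  unfolding align_err_def by simp

lemma align_part: "((\<lambda>t. Max {align_err (x i t) (x j t) (v i t) (v j t) | i j. i < N \<and> j < N}) \<longlongrightarrow> 0) at_top"
proof (rule tendsto_sandwich[where f = "\<lambda>_. 0" and h = "\<lambda>t. 2 * sqrt (fsum t / pmin)"])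
  show "eventually (\<lambda>t. 0 \<le> Max {align_err (x i t) (x j t) (v i t) (v j t) | i j. i < N \<and> j < N}) at_top"
  proof (intro always_eventually allI)
    fix t
    have "align_err (x 0 t) (x 0 t) (v 0 t) (v 0 t) \<in> {align_err (x i t) (x j t) (v i t) (v j t) | i j. i < N \<and> j < N}"
      using N by (auto intro!: exI[of _ 0])
    then show "0 \<le> Max {align_err (x i t) (x j t) (v i t) (v j t) | i j. i < N \<and> j < N}"
      by (rule order_trans[OF align_nonneg Max_ge[OF set_fin]])
  qed
  show "eventually (\<lambda>t. Max {align_err (x i t) (x j t) (v i t) (v j t) | i j. i < N \<and> j < N} \<le> 2 * sqrt (fsum t / pmin)) at_top"
    by (intro eventually_at_top_linorderI[of 0]) (auto simp: Max_le_iff[OF set_fin set_ne] intro!: align_bound)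
  show "((\<lambda>_. 0) \<longlongrightarrow> (0::real)) at_top" by simp
  have "((\<lambda>t. 2 * sqrt (fsum t / pmin)) \<longlongrightarrow> 2 * sqrt (0 / pmin)) at_top"
    using pmin_pos by (intro tendsto_intros fsum_lim) auto
  then show "((\<lambda>t. 2 * sqrt (fsum t / pmin)) \<longlongrightarrow> 0) at_top" by simp
qed

theorem main:
  "((\<lambda>t. Max {align_err (x i t) (x j t) (v i t) (v j t) | i j. i < N \<and> j < N}) \<longlongrightarrow> 0) at_top
   \<and> Liminf at_top (\<lambda>t. ereal (Min {norm (x i t + x j t) | i j. i < N \<and> j < N})) > 0"
  using align_part liminf_part by simp

end


theorem theorem4p7:
  fixes N :: nat and \<sigma> :: real
    and \<psi> \<psi>' :: "real \<Rightarrow> real"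
    and x v :: "nat \<Rightarrow> real \<Rightarrow> real^3"
  assumes N: "N \<ge> 1"
    and sigma: "\<sigma> > 0"
    and psi_nonneg: "\<And>s. s \<in> {0..2} \<Longrightarrow> \<psi> s \<ge> 0"
    and psi_decr: "\<And>a b. 0 \<le> a \<Longrightarrow> a \<le> b \<Longrightarrow> b \<le> 2 \<Longrightarrow> \<psi> b \<le> \<psi> a"
    and psi_deriv: "\<And>s. s \<in> {0..2} \<Longrightarrow> (\<psi> has_real_derivative \<psi>' s) (at s within {0..2})"
    and psi_C1: "continuous_on {0..2} \<psi>'"
    and psi_2: "\<psi> 2 = 0"
    and psi'_2: "\<psi>' 2 < 0"
    and ode_x: "\<And>i t. i < N \<Longrightarrow> t \<ge> 0 \<Longrightarrow>
        ((x i) has_vector_derivative v i t) (at t within {0..})"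
    and ode_v: "\<And>i t. i < N \<Longrightarrow> t \<ge> 0 \<Longrightarrow>
        ((v i) has_vector_derivative
           (- ((norm (v i t))\<^sup>2 / (norm (x i t))\<^sup>2) *\<^sub>R x i t
            + (\<Sum>j<N. (1 / real N) *\<^sub>R
                 (psiRv \<psi> (x i t) (x j t) (v j t) - \<psi> (norm (x i t - x j t)) *\<^sub>R v i t))
            + (\<Sum>k<N. (\<sigma> / real N) *\<^sub>R
                 ((norm (x i t))\<^sup>2 *\<^sub>R x k t - (x i t \<bullet> x k t) *\<^sub>R x i t))))
         (at t within {0..})"
    and init_sphere: "\<And>i. i < N \<Longrightarrow> norm (x i 0) = 1"
    and init_tangent: "\<And>i. i < N \<Longrightarrow> v i 0 \<bullet> x i 0 = 0"
    and energy_small: "2 * \<sigma> > (real N)\<^sup>2 * energy N \<sigma> (\<lambda>k. x k 0) (\<lambda>k. v k 0)"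
  shows "((\<lambda>t. Max {align_err (x i t) (x j t) (v i t) (v j t) | i j. i < N \<and> j < N})
            \<longlongrightarrow> 0) at_top
       \<and> Liminf at_top (\<lambda>t. ereal (Min {norm (x i t + x j t) | i j. i < N \<and> j < N})) > 0"
proof -
  interpret flock N \<sigma> \<psi> \<psi>' x v
    by (rule flock.intro) (fact assms)+
  show ?thesis by (rule main)
qed

end
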